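(* Let $\gamma$ follow the MFTR distribution with parameters $K>0$, $\Delta\in[0,1]$, $m>0$, $\mu>0$ and mean $\overline{\gamma}>0$. Then for every real $s\le 0$ the moment generating function $\mathcal{M}_\gamma(s)=\mathbb{E}\{e^{s\gamma}\}$ is $$\mathcal{M}_\gamma(s)=\frac{m^{m}\mu^{\mu}(1+K)^{\mu}\left(\mu(1+K)-\overline{\gamma}s\right)^{m-\mu}}{\left(\sqrt{\mathcal{R}(s)}\right)^{m}}\,P_{m-1}\!\left(\frac{m\mu(1+K)-(\mu K+m)\overline{\gamma}s}{\sqrt{\mathcal{R}(s)}}\right),$$ where $$\mathcal{R}(s)=\left[(m+\mu K)^2-(\mu K\Delta)^2\right]\overline{\gamma}^2s^2-2m\mu(1+K)(m+\mu K)\overline{\gamma}s+\left[(1+K)m\mu\right]^2 .$$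
   Context: MFTR (multi-cluster fluctuating two-ray) distribution. Fix parameters $K>0$, $\Delta\in[0,1]$, $m>0$, $\mu>0$, $\overline{\gamma}>0$. Physical model (for positive integer $\mu$): let $W=\left|\sqrt{\zeta}\,(V_1e^{j\phi_1}+V_2e^{j\phi_2})+X_1+jY_1\right|^2+\sum_{i=2}^{\mu}\left|\sqrt{\zeta}\,U_ie^{j\varphi_i}+X_i+jY_i\right|^2$, where $V_1,V_2,U_2,\dots,U_\mu\ge 0$ are constants, $\phi_1,\phi_2,\varphi_2,\dots,\varphi_\mu$ are i.i.d. uniform on $[0,2\pi)$, $X_i,Y_i$ ($i=1,\dots,\mu$) are i.i.d. $\mathcal{N}(0,\sigma^2)$, and $\zeta$ is Gamma distributed with density $m^m x^{m-1}e^{-mx}/\Gamma(m)$ on $x>0$ (unit mean), all mutually independent; $K=\frac{V_1^2+V_2^2+\sum_{i=2}^\mu U_i^2}{2\sigma^2\mu}$, $\Delta=\frac{2V_1V_2}{V_1^2+V_2^2+\sum_{i=2}^\mu U_i^2}$, and the SNR is $\gamma=(E_s/N_0)W$ with constant $E_s/N_0>0$, so that $\overline{\gamma}=\mathbb{E}\{\gamma\}=(E_s/N_0)2\sigma^2\mu(1+K)$. General definition (any real $\mu>0$; for integer $\mu$ it yields the same law as the physical model): $\gamma$ has the MFTR distribution with parameters $(K,\Delta,m,\mu,\overline{\gamma})$ if, with $\Theta$ uniform on $[0,\pi]$ and conditionally on $\Theta=\theta$, $\gamma$ has the $\kappa$-$\mu$ shadowed distribution with parameters $\kappa_\theta=K(1+\Delta\cos\theta)$,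 $\mu$, $m$ and mean $\overline{\gamma}_\theta=\overline{\gamma}(1+\kappa_\theta)/(1+K)$. Here the $\kappa$-$\mu$ shadowed distribution with parameters $\kappa\ge0,\mu>0,m>0$ and mean $\bar g>0$ is the law on $(0,\infty)$ with MGF $\mathbb{E}\{e^{s\gamma}\}=\left(1-\frac{\bar g s}{\mu(1+\kappa)}\right)^{m-\mu}\left(1-\frac{(\mu\kappa+m)\bar g s}{m\mu(1+\kappa)}\right)^{-m}$, $s\le0$. Notation: $P_\nu(z)={}_2F_1\!\left(-\nu,\nu+1;1;\frac{1-z}{2}\right)$ is the Legendre function of the first kind of degree $\nu$, ${}_2F_1$ the Gauss hypergeometric function. *)

theory Defs
  imports "HOL-Probability.Probability"
begin

definition hyp2F1_series :: "real \<Rightarrow> real \<Rightarrow> real \<Rightarrow> real \<Rightarrow> real" where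
  "hyp2F1_series a b c z =
     (\<Sum>n. pochhammer a n * pochhammer b n / (pochhammer c n * fact n) * z ^ n)"

text \<open>Principal branch of the Gauss hypergeometric function on the real half-line z < 1:
  the power series for |z| < 1, and its analytic continuation for z \<le> -1 given by
  Pfaff's transformation  2F1(a,b;c;z) = (1-z)^(-a) 2F1(a,c-b;c;z/(z-1)).\<close>
definition hyp2F1 :: "real \<Rightarrow> real \<Rightarrow> real \<Rightarrow> real \<Rightarrow> real" where
  "hyp2F1 a b c z =
     (if \<bar>z\<bar> < 1 then hyp2F1_series a b c z
      else if z \<le> -1 then (1 - z) powr (- a) * hyp2F1_series a (c - b) c (z / (z - 1))
      else undefined)"

definition legendreP :: "real \<Rightarrow> real \<Rightarrow> real" where
  "legendreP \<nu> z = hyp2F1 (- \<nu>) (\<nu> + 1) 1 ((1 - z) / 2)"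

definition kms_mgf :: "real \<Rightarrow> real \<Rightarrow> real \<Rightarrow> real \<Rightarrow> real \<Rightarrow> real" where
  "kms_mgf \<kappa> \<mu> m g s =
     (1 - g * s / (\<mu> * (1 + \<kappa>))) powr (m - \<mu>) *
     (1 - (\<mu> * \<kappa> + m) * g * s / (m * \<mu> * (1 + \<kappa>))) powr (- m)"

definition kms_distr :: "real \<Rightarrow> real \<Rightarrow> real \<Rightarrow> real \<Rightarrow> real measure \<Rightarrow> bool" where
  "kms_distr \<kappa> \<mu> m g N \<longleftrightarrow>
     prob_space N \<and> sets N = sets borel \<and> emeasure N {0<..} = 1 \<and>
     (\<forall>s\<le>0. (\<integral>x. exp (s * x) \<partial>N) = kms_mgf \<kappa> \<mu> m g s)"

definition mftr_distr :: "real \<Rightarrow> real \<Rightarrow> real \<Rightarrow> real \<Rightarrow> real \<Rightarrow> real measure \<Rightarrow> bool" where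
  "mftr_distr K \<Delta> m \<mu> g M \<longleftrightarrow>
     (\<exists>N. N \<in> measurable (uniform_measure lborel {0..pi}) (subprob_algebra borel) \<and>
          (\<forall>\<theta>\<in>{0..pi}. kms_distr (K * (1 + \<Delta> * cos \<theta>)) \<mu> m
                             (g * (1 + K * (1 + \<Delta> * cos \<theta>)) / (1 + K)) (N \<theta>)) \<and>
          M = (uniform_measure lborel {0..pi} \<bind> N))"

end

theory Submission
  imports Defs "HOL-Complex_Analysis.Complex_Analysis"
begin

definition hf :: "complex \<Rightarrow> complex \<Rightarrow> complex fps" where
  "hf a b = Abs_fps (\<lambda>n. pochhammer a n * pochhammer b n / (fact n)^2)"

definition hode :: "complex \<Rightarrow> complex \<Rightarrow> complex fps \<Rightarrow> complex fps" where
  "hode a b F = fps_X * (1 - fps_X) * fps_deriv (fps_deriv F)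
     + (1 - fps_const (a+b+1) * fps_X) * fps_deriv F - fps_const (a*b) * F"

lemma hode_nth: "hode a b F $ n = (of_nat n + 1)^2 * F $ Suc n - (of_nat n + a) * (of_nat n + b) * F $ n"
proof -
  have e: "hode a b F = fps_X * fps_deriv (fps_deriv F) - fps_X * (fps_X * fps_deriv (fps_deriv F))
     + fps_deriv F - fps_const (a+b+1) * (fps_X * fps_deriv F) - fps_const (a*b) * F"
    unfolding hode_def by (simp add: algebra_simps)
  show ?thesis
  proof (cases n)
    case 0 then show ?thesis by (simp add: e fps_X_mult_nth)
  next
    case (Suc k) note n = this
    show ?thesis
    proof (cases k)
      case 0 then show ?thesis by (simp add: e fps_X_mult_nth n algebra_simps power2_eq_square)
    next
      case (Suc j) then show ?thesis by (simp add: e fps_X_mult_nth n algebra_simps power2_eq_square)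
    qed
  qed
qed

lemma hode_alt: "hode a b F = fps_X * (1 - fps_X) * fps_deriv (fps_deriv F)
     + (1 - (fps_const a + fps_const b + 1) * fps_X) * fps_deriv F - fps_const a * fps_const b * F"
proof -
  have "fps_const (a+b+1) = fps_const a + fps_const b + 1" by (simp add: fps_eq_iff)
  moreover have "fps_const (a*b) = fps_const a * fps_const b" by simp
  ultimately show ?thesis unfolding hode_def by metis
qed

lemma hf_0 [simp]: "hf a b $ 0 = 1"
  by (simp add: hf_def)

lemma hf_Suc: "(of_nat n + 1)^2 * hf a b $ Suc n = (of_nat n + a) * (of_nat n + b) * hf a b $ n"
proof -
  have f: "fact (Suc n) = (of_nat n + 1) * (fact n :: complex)" by (simp add: algebra_simps)
  have ne: "(of_nat n + 1 :: complex) \<noteq> 0" by (metis of_nat_Suc of_nat_eq_0_iff add.commute nat.distinct(1))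
  have "hf a b $ Suc n = ((of_nat n + a) * (of_nat n + b)) * (pochhammer a n * pochhammer b n) / ((of_nat n + 1)^2 * (fact n)^2)"
    unfolding hf_def fps_nth_Abs_fps pochhammer_rec' f by (simp add: power_mult_distrib mult_ac add.commute)
  also have "\<dots> = ((of_nat n + a) * (of_nat n + b)) * hf a b $ n / (of_nat n + 1)^2"
    by (simp add: hf_def)
  finally show ?thesis using ne by simp
qed

lemma hode_hf: "hode a b (hf a b) = 0"
  by (rule fps_ext) (simp add: hode_nth hf_Suc)

lemma hode_unique:
  assumes "hode a b F = 0"
  shows "F = fps_const (F $ 0) * hf a b"
proof (rule fps_ext)
  fix n show "F $ n = (fps_const (F $ 0) * hf a b) $ n"
  proof (induction n)
    case 0 then show ?case by simp
  next
    case (Suc n)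
    have ne: "(of_nat n + 1 :: complex)^2 \<noteq> 0" by (metis of_nat_Suc of_nat_eq_0_iff add.commute nat.distinct(1) power_eq_0_iff)
    have "(of_nat n + 1)^2 * F $ Suc n = (of_nat n + a) * (of_nat n + b) * F $ n"
      using arg_cong[OF assms, of "\<lambda>G. G $ n"] by (simp add: hode_nth)
    also have "\<dots> = (of_nat n + 1)^2 * (F $ 0 * hf a b $ Suc n)"
      using Suc hf_Suc[of n a b] by (simp add: algebra_simps)
    finally show ?case using ne by simp
  qed
qed

definition bm :: "complex \<Rightarrow> complex fps" where
  "bm c = fps_binomial c oo (- fps_X)"

lemma bm_0 [simp]: "bm c $ 0 = 1"
  by (simp add: bm_def)

lemma fps_binomial_deriv': "(1 + fps_X) * fps_deriv (fps_binomial (c::complex)) = fps_const c * fps_binomial c"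
proof -
  have ne: "(1 + fps_X :: complex fps) \<noteq> 0"
    by (intro notI) (drule arg_cong[of _ _ "\<lambda>f. fps_nth f 0"], simp)
  have "fps_const c * fps_binomial c / (1 + fps_X) * (1 + fps_X) = fps_const c * fps_binomial c"
    using fps_times_divide_eq[OF ne, of "fps_const c * fps_binomial c"] by simp
  then show ?thesis by (simp add: fps_binomial_deriv mult.commute)
qed

lemma bm_deriv: "(1 - fps_X) * fps_deriv (bm (c::complex)) = - (fps_const c * bm c)"
proof -
  let ?fb = "fps_binomial c"
  have d: "fps_deriv (bm c) = - (fps_deriv ?fb oo (- fps_X))"
    unfolding bm_def by (subst fps_compose_deriv) auto
  have "((1 + fps_X) * fps_deriv ?fb) oo (- fps_X) = (fps_const c * ?fb) oo (- fps_X)"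
    by (simp add: fps_binomial_deriv')
  then have "(1 - fps_X) * (fps_deriv ?fb oo (- fps_X)) = fps_const c * bm c"
    by (simp add: fps_compose_mult_distrib fps_compose_add_distrib bm_def)
  then show ?thesis by (simp add: d)
qed

lemma deriv2_from:
  assumes "(1 - fps_X) * fps_deriv F = fps_const k * (F :: complex fps)"
  shows "(1 - fps_X) * fps_deriv (fps_deriv F) = (fps_const k + 1) * fps_deriv F"
proof -
  have "fps_deriv ((1 - fps_X) * fps_deriv F) = fps_deriv (fps_const k * F)"
    using assms by simp
  then have "(1 - fps_X) * fps_deriv (fps_deriv F) - fps_deriv F = fps_const k * fps_deriv F"
    by (simp add: algebra_simps)
  then show ?thesis by algebra
qed

lemma euler_formal: "hf (1 - m) (1 - m) = bm (2*m - 1) * hf m m"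
proof -
  define B where "B = bm (2*m - 1)"
  define G where "G = hf m m"
  define M where "M = fps_const m"
  define D where "D = (1 - fps_X :: complex fps)"
  have c0: "fps_const (2*m-1) = 2*M - 1" by (simp add: M_def fps_eq_iff fps_numeral_nth)
  have c1: "- (fps_const (2*m-1) * B) = (1 - 2*M) * B" unfolding c0 by (simp add: algebra_simps)
  have c3: "fps_const (1-m) = 1 - M" by (simp add: M_def fps_eq_iff)
  have c2: "fps_const (-(2*m-1)) + 1 = 2 - 2*M" by (simp add: M_def fps_eq_iff fps_numeral_nth)
  have hB: "D * fps_deriv B = (1 - 2*M) * B"
    using bm_deriv[of "2*m-1"] c1 by (simp add: B_def D_def)
  have hB2: "D * fps_deriv (fps_deriv B) = (2 - 2*M) * fps_deriv B"
    using deriv2_from[of "bm (2*m-1)" "-(2*m-1)"] bm_deriv[of "2*m-1"] c1 c2 by (simp add: B_def D_def)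
  have hG: "fps_X * D * fps_deriv (fps_deriv G) + (1 - (2*M+1) * fps_X) * fps_deriv G - M*M*G = 0"
    using hode_hf[of m m] unfolding hode_alt by (simp add: G_def D_def M_def algebra_simps)
  define E where "E = fps_X * D * fps_deriv (fps_deriv (B*G)) + (1 - (3 - 2*M) * fps_X) * fps_deriv (B*G) - (1-M)*(1-M)*(B*G)"
  have "D * E = 0"
    using hB hB2 hG unfolding D_def E_def by (simp add: fps_deriv_mult) algebra
  moreover have "D \<noteq> 0" unfolding D_def by (intro notI) (drule arg_cong[of _ _ "\<lambda>f. fps_nth f 0"], simp)
  ultimately have E0: "E = 0" by simp
  have "hode (1-m) (1-m) (B*G) = E"
    unfolding hode_alt c3 E_def D_def by (simp add: algebra_simps)
  with E0 have "hode (1-m) (1-m) (B*G) = 0" by simp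
  from hode_unique[OF this] show ?thesis by (simp add: B_def G_def)
qed

definition qf :: "complex fps" where
  "qf = - fps_X * inverse (1 - fps_X)"

lemma qf_0 [simp]: "qf $ 0 = 0"
  by (simp add: qf_def)

lemma qf_D: "(1 - fps_X) * qf = - fps_X"
proof -
  have "(1 - fps_X) * inverse (1 - fps_X) = (1 :: complex fps)"
    by (rule inverse_mult_eq_1') simp
  then show ?thesis unfolding qf_def by (metis mult.left_commute mult.right_neutral mult_minus_left)
qed

lemma pfaff_formal: "hf (1 - m) m = bm (- m) * (hf m m oo qf)"
proof -
  define B where "B = bm (- m)"
  define G where "G = hf m m"
  define M where "M = fps_const m"
  define D where "D = (1 - fps_X :: complex fps)"
  define g0 where "g0 = G oo qf"
  define g1 where "g1 = fps_deriv G oo qf"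
  define g2 where "g2 = fps_deriv (fps_deriv G) oo qf"
  define Q where "Q = qf"
  have hB: "D * fps_deriv B = M * B"
    using bm_deriv[of "-m"] unfolding B_def D_def M_def by (metis fps_const_neg minus_minus mult_minus_left)
  have hB2: "D * fps_deriv (fps_deriv B) = (M + 1) * fps_deriv B"
    using deriv2_from[of "bm (-m)" "m"] bm_deriv[of "-m"] unfolding B_def D_def M_def by (metis fps_const_neg minus_minus mult_minus_left)
  have hQ: "D * Q = - fps_X" using qf_D by (simp add: D_def Q_def)
  have hQ1: "D * fps_deriv Q = Q - 1"
  proof -
    have "fps_deriv (D * Q) = fps_deriv (- fps_X)" using hQ by simp
    then show ?thesis by (simp add: D_def algebra_simps)
  qed
  have hQ2: "D * fps_deriv (fps_deriv Q) = 2 * fps_deriv Q"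
  proof -
    have "fps_deriv (D * fps_deriv Q) = fps_deriv (Q - 1)" using hQ1 by simp
    then show ?thesis by (simp add: D_def algebra_simps)
  qed
  have d0: "fps_deriv g0 = g1 * fps_deriv Q"
    unfolding g0_def g1_def Q_def by (rule fps_compose_deriv) simp
  have d1: "fps_deriv g1 = g2 * fps_deriv Q"
    unfolding g2_def g1_def Q_def by (rule fps_compose_deriv) simp
  have "hode m m G oo qf = 0" by (simp add: G_def hode_hf)
  then have hG: "Q * (1 - Q) * g2 + (1 - (2*M+1) * Q) * g1 - M*M*g0 = 0"
    unfolding hode_alt g0_def g1_def g2_def Q_def M_def
    by (simp add: fps_compose_mult_distrib fps_compose_add_distrib fps_compose_sub_distrib algebra_simps)
  define E where "E = fps_X * D * fps_deriv (fps_deriv (B*g0)) + (1 - 2 * fps_X) * fps_deriv (B*g0) - M*(1-M)*(B*g0)"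
  have "D*D*D*D * E = 0"
    using hB hB2 hQ hQ1 hQ2 hG unfolding D_def E_def by (simp add: fps_deriv_mult d0 d1) algebra
  moreover have "D \<noteq> 0" unfolding D_def by (intro notI) (drule arg_cong[of _ _ "\<lambda>f. fps_nth f 0"], simp)
  ultimately have E0: "E = 0" by simp
  have c3: "fps_const (1-m) = 1 - M" by (simp add: M_def fps_eq_iff)
  have "hode (1-m) m (B*g0) = E"
    unfolding hode_alt c3 E_def D_def by (simp add: algebra_simps M_def)
  with E0 have "hode (1-m) m (B*g0) = 0" by simp
  from hode_unique[OF this] show ?thesis by (simp add: B_def G_def g0_def)
qed

lemma gchoose_summ:
  fixes a :: complex
  assumes "0 \<le> r" "r < 1"
  shows "summable (\<lambda>n. norm ((a gchoose n) * of_real r ^ n))"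
proof (rule abs_summable_in_conv_radius)
  have "conv_radius (\<lambda>n. a gchoose n) \<ge> 1"
    by (simp add: conv_radius_gchoose)
  moreover have "ereal (norm (of_real r :: complex)) < 1" using assms by simp
  ultimately show "ereal (norm (of_real r :: complex)) < conv_radius (\<lambda>n. a gchoose n)"
    by (meson less_le_trans)
qed

lemma hf_nth_gchoose: "hf a b $ n = ((-a) gchoose n) * ((-b) gchoose n)"
  by (simp add: hf_def gbinomial_pochhammer power2_eq_square power_mult_distrib[symmetric])

lemma hf_conv: "fps_conv_radius (hf a b) \<ge> 1"
  unfolding fps_conv_radius_def
proof (rule conv_radius_geI_ex')
  fix r :: real assume r: "0 < r" "ereal r < 1"
  define \<rho> where "\<rho> = sqrt r"
  have \<rho>: "0 \<le> \<rho>" "\<rho> < 1" using r by (auto simp: \<rho>_def real_sqrt_lt_1_iff)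
  have s1: "summable (\<lambda>n. norm (((-a) gchoose n) * of_real \<rho> ^ n))" by (rule gchoose_summ[OF \<rho>])
  have s2: "summable (\<lambda>n. norm (((-b) gchoose n) * of_real \<rho> ^ n))" by (rule gchoose_summ[OF \<rho>])
  from summable_LIMSEQ_zero[OF s1] have "Bseq (\<lambda>n. norm (((-a) gchoose n) * of_real \<rho> ^ n))"
    by (rule convergent_imp_Bseq[OF convergentI])
  then obtain C where C: "C > 0" "\<And>n. norm (norm (((-a) gchoose n) * of_real \<rho> ^ n)) \<le> C"
    by (auto elim: BseqE)
  have eq: "hf a b $ n * of_real r ^ n = (((-a) gchoose n) * of_real \<rho> ^ n) * (((-b) gchoose n) * of_real \<rho> ^ n)" for n
  proof -
    have "(of_real \<rho> :: complex) ^ n * of_real \<rho> ^ n = of_real r ^ n"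
      using r by (simp add: \<rho>_def power_mult_distrib[symmetric] of_real_mult[symmetric] del: of_real_mult)
    then show ?thesis by (simp add: hf_nth_gchoose mult_ac)
  qed
  show "summable (\<lambda>n. fps_nth (hf a b) n * of_real r ^ n)"
    unfolding eq
  proof (rule summable_norm_cancel, rule summable_comparison_test')
    show "summable (\<lambda>n. C * norm (((-b) gchoose n) * of_real \<rho> ^ n))"
      using s2 by (rule summable_mult)
    fix n
    show "norm (norm (((-a) gchoose n) * of_real \<rho> ^ n * (((-b) gchoose n) * of_real \<rho> ^ n)))
          \<le> C * norm (((-b) gchoose n) * of_real \<rho> ^ n)"
      using C(2)[of n] by (simp add: norm_mult mult_right_mono del: norm_of_real)
  qed
qed

lemma hf_has_exp: "eval_fps (hf a b) has_fps_expansion hf a b"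
proof (rule eval_fps_has_fps_expansion)
  have "(0::ereal) < 1" by simp
  then show "0 < fps_conv_radius (hf a b)" using hf_conv[of a b] by (rule less_le_trans)
qed

lemma hf_holo [holomorphic_intros]: "A \<subseteq> ball 0 1 \<Longrightarrow> eval_fps (hf a b) holomorphic_on A"
proof (rule holomorphic_on_eval_fps, rule subsetI)
  fix x assume "A \<subseteq> ball 0 1" "x \<in> A"
  then have "ereal (norm x) < 1" by auto
  then have "ereal (norm x) < fps_conv_radius (hf a b)" using hf_conv[of a b] by (rule order.strict_trans2)
  then show "x \<in> eball 0 (fps_conv_radius (hf a b))" by simp
qed

lemma bm_has_exp: "(\<lambda>w. (1 - w) powr c) has_fps_expansion bm c"
proof -
  have "((\<lambda>x. (1 + x) powr c) \<circ> (\<lambda>x. - x)) has_fps_expansion (fps_binomial c oo (- fps_X))"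
    by (rule has_fps_expansion_compose has_fps_expansion_binomial_complex
             has_fps_expansion_minus has_fps_expansion_fps_X)+ simp
  then show ?thesis by (simp add: bm_def o_def)
qed

lemma powr_holo: "A \<subseteq> {z. Re z < 1} \<Longrightarrow> (\<lambda>w. (1 - w) powr c) holomorphic_on A"
  by (intro holomorphic_on_powr holomorphic_intros) (auto simp: complex_nonpos_Reals_iff subset_eq)

lemma euler_analytic:
  assumes "norm w < 1"
  shows "eval_fps (hf (1-m) (1-m)) w = (1-w) powr (2*m-1) * eval_fps (hf m m) w"
proof -
  have e: "(\<lambda>w. (1-w) powr (2*m-1) * eval_fps (hf m m) w) has_fps_expansion hf (1-m) (1-m)"
    unfolding euler_formal by (intro has_fps_expansion_mult bm_has_exp hf_has_exp)
  have "ball 0 1 \<subseteq> {z::complex. Re z < 1}"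
  proof
    fix z :: complex assume "z \<in> ball 0 1"
    then have "norm z < 1" by simp
    then show "z \<in> {z. Re z < 1}" using complex_Re_le_cmod[of z] by simp
  qed
  then have h: "(\<lambda>w. (1-w) powr (2*m-1) * eval_fps (hf m m) w) holomorphic_on ball 0 1"
    by (intro holomorphic_intros powr_holo hf_holo) auto
  show ?thesis
    using has_fps_expansion_imp_eval_fps_eq[OF e _ h, of w] assms
      has_fps_expansion_imp_eval_fps_eq[OF hf_has_exp _ hf_holo[OF order_refl], of w "1-m" "1-m"]
    by simp
qed

definition pA :: "complex set" where "pA = ball 0 1 \<inter> {z. Re z < 1/2}"

lemma qfun_norm:
  assumes "x \<in> pA" shows "norm (- x * inverse (1 - x)) < 1"
proof -
  have r: "Re x < 1/2" using assms by (simp add: pA_def)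
  have ne: "1 - x \<noteq> 0" using r by (auto simp: complex_eq_iff)
  have e1: "norm x ^ 2 = Re x ^ 2 + Im x ^ 2" by (simp add: cmod_power2)
  have e2: "norm (1 - x) ^ 2 = (1 - Re x) ^ 2 + Im x ^ 2" by (simp add: cmod_power2)
  have "norm x ^ 2 < norm (1 - x) ^ 2"
    unfolding e1 e2 using r by (simp add: power2_eq_square algebra_simps)
  then have "norm x < norm (1 - x)" by (simp add: power_less_imp_less_base)
  moreover have "norm (- x * inverse (1 - x)) = norm x / norm (1 - x)"
    by (simp add: norm_mult norm_inverse divide_inverse)
  moreover have "norm (1 - x) > 0" using ne by simp
  ultimately show ?thesis by (simp add: divide_less_eq)
qed

lemma pfaff_analytic:
  assumes "x \<in> pA"
  shows "eval_fps (hf (1-m) m) x = (1-x) powr (-m) * eval_fps (hf m m) (- x * inverse (1 - x))"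
proof -
  define q where "q = (\<lambda>x::complex. - x * inverse (1 - x))"
  define f where "f = (\<lambda>x. eval_fps (hf (1-m) m) x - (1-x) powr (-m) * (eval_fps (hf m m) \<circ> q) x)"
  have qe: "q has_fps_expansion qf"
    unfolding q_def qf_def
    by (intro has_fps_expansion_mult has_fps_expansion_minus has_fps_expansion_fps_X
          has_fps_expansion_inverse has_fps_expansion_diff has_fps_expansion_1) simp
  have ce: "(eval_fps (hf m m) \<circ> q) has_fps_expansion (hf m m oo qf)"
    by (rule has_fps_expansion_compose[OF hf_has_exp qe]) simp
  have "f has_fps_expansion (hf (1-m) m - bm (-m) * (hf m m oo qf))"
    unfolding f_def by (intro has_fps_expansion_diff has_fps_expansion_mult hf_has_exp bm_has_exp ce)
  then have fe: "f has_fps_expansion 0" by (simp add: pfaff_formal[symmetric])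
  have opn: "open pA" unfolding pA_def by (intro open_Int open_ball open_halfspace_Re_lt)
  have cnv: "convex pA" unfolding pA_def by (intro convex_Int convex_ball convex_halfspace_Re_lt)
  have sub1: "pA \<subseteq> ball 0 1" by (auto simp: pA_def)
  have sub2: "pA \<subseteq> {z. Re z < 1}" by (auto simp: pA_def)
  have qh: "q holomorphic_on pA"
    unfolding q_def by (intro holomorphic_intros) (auto simp: pA_def complex_eq_iff)
  have qim: "q ` pA \<subseteq> ball 0 1" using qfun_norm by (auto simp: q_def)
  have hc: "(eval_fps (hf m m) \<circ> q) holomorphic_on pA"
    by (rule holomorphic_on_compose_gen[OF qh hf_holo[OF order_refl] qim])
  have "f holomorphic_on pA"
    unfolding f_def by (intro holomorphic_intros powr_holo sub1 sub2 hc)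
  from has_fps_expansion_0_analytic_continuation[OF fe this opn convex_connected[OF cnv] _ assms]
  have "f x = 0" by (simp add: pA_def)
  then show ?thesis by (simp add: f_def q_def)
qed

lemma hyp_real:
  fixes a b x :: real
  assumes "\<bar>x\<bar> < 1"
  shows "complex_of_real (hyp2F1_series a b 1 x) = eval_fps (hf (of_real a) (of_real b)) (of_real x)"
proof -
  define t where "t = (\<lambda>n. pochhammer a n * pochhammer b n / (pochhammer 1 n * fact n) * x ^ n)"
  have "ereal (norm (of_real x :: complex)) < 1" using assms by simp
  then have "ereal (norm (of_real x :: complex)) < fps_conv_radius (hf (of_real a) (of_real b))"
    using hf_conv by (rule order.strict_trans2)
  from sums_eval_fps[OF this]
  have s: "(\<lambda>n. complex_of_real (t n)) sums eval_fps (hf (of_real a) (of_real b)) (of_real x)"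
    by (simp add: t_def hf_def pochhammer_of_real pochhammer_fact[symmetric] power2_eq_square)
  then have "summable t" using summable_complex_of_real sums_summable by blast
  then have "(\<lambda>n. complex_of_real (t n)) sums complex_of_real (suminf t)"
    using sums_of_real summable_sums by blast
  with s have "eval_fps (hf (of_real a) (of_real b)) (of_real x) = complex_of_real (suminf t)"
    by (simp add: sums_unique2)
  then show ?thesis by (simp add: hyp2F1_series_def t_def)
qed

lemma euler_real:
  fixes m w :: real
  assumes "\<bar>w\<bar> < 1"
  shows "hyp2F1_series (1-m) (1-m) 1 w = (1-w) powr (2*m-1) * hyp2F1_series m m 1 w"
proof -
  have n: "norm (complex_of_real w) < 1" using assms by simp
  have p: "(1 - complex_of_real w) powr (2 * complex_of_real m - 1) = complex_of_real ((1-w) powr (2*m-1))"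
    using powr_of_real[of "1-w" "2*m-1"] assms by simp
  have "complex_of_real (hyp2F1_series (1-m) (1-m) 1 w) = complex_of_real ((1-w) powr (2*m-1) * hyp2F1_series m m 1 w)"
    using euler_analytic[OF n, of "of_real m"] p hyp_real[OF assms, of "1-m" "1-m"] hyp_real[OF assms, of m m]
    by simp
  then show ?thesis using of_real_eq_iff by blast
qed

lemma pfaff_real:
  fixes m x :: real
  assumes "\<bar>x\<bar> < 1" "x \<le> 0"
  shows "hyp2F1_series (1-m) m 1 x = (1-x) powr (-m) * hyp2F1_series m m 1 (-x/(1-x))"
proof -
  have A: "complex_of_real x \<in> pA" using assms by (simp add: pA_def)
  have q: "- complex_of_real x * inverse (1 - complex_of_real x) = complex_of_real (-x/(1-x))"
    by (simp add: divide_inverse)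
  have qn: "\<bar>-x/(1-x)\<bar> < 1" using qfun_norm[OF A] q by (metis norm_of_real)
  have p: "(1 - complex_of_real x) powr (- complex_of_real m) = complex_of_real ((1-x) powr (-m))"
    using powr_of_real[of "1-x" "-m"] assms by simp
  have "complex_of_real (hyp2F1_series (1-m) m 1 x) = complex_of_real ((1-x) powr (-m) * hyp2F1_series m m 1 (-x/(1-x)))"
    using pfaff_analytic[OF A, of "of_real m"] p q hyp_real[OF assms(1), of "1-m" m] hyp_real[OF qn, of m m]
    by simp
  then show ?thesis using of_real_eq_iff by blast
qed

lemma powr_aux: "(y::real) powr (m-1) * inverse y powr (2*m-1) = y powr (-m)"
proof -
  have "y powr (m-1) * inverse y powr (2*m-1) = y powr (m-1) * y powr (-(2*m-1))"
    by (simp only: inverse_powr powr_minus)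
  also have "\<dots> = y powr ((m-1) + -(2*m-1))" by (simp only: powr_add)
  also have "(m-1) + -(2*m-1) = -m" by simp
  finally show ?thesis .
qed

lemma legendre_eq:
  fixes m z :: real
  assumes "z \<ge> 1"
  shows "legendreP (m-1) z = ((z+1)/2) powr (-m) * hyp2F1_series m m 1 ((z-1)/(z+1))"
proof -
  define x where "x = (1 - z) / 2"
  have x0: "x \<le> 0" using assms by (simp add: x_def)
  have e1: "1 - x = (z+1)/2" by (simp add: x_def field_simps)
  have e2: "-x/(1-x) = (z-1)/(z+1)" using assms by (simp add: x_def field_simps)
  have e3: "x/(x-1) = (z-1)/(z+1)" using assms by (simp add: x_def field_simps)
  have L: "legendreP (m-1) z = hyp2F1 (1-m) m 1 x" by (simp add: legendreP_def x_def)
  show ?thesis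
  proof (cases "\<bar>x\<bar> < 1")
    case True
    have "hyp2F1 (1-m) m 1 x = hyp2F1_series (1-m) m 1 x" using True by (simp add: hyp2F1_def)
    also have "\<dots> = (1-x) powr (-m) * hyp2F1_series m m 1 (-x/(1-x))" by (rule pfaff_real[OF True x0])
    also have "\<dots> = ((z+1)/2) powr (-m) * hyp2F1_series m m 1 ((z-1)/(z+1))"
      by (subst e2, subst e1, rule refl)
    finally show ?thesis unfolding L .
  next
    case False
    then have x1: "x \<le> -1" using x0 by simp
    define w where "w = (z-1)/(z+1)"
    have w: "\<bar>w\<bar> < 1" "0 \<le> w" using assms by (auto simp: w_def field_simps)
    have ew: "1 - w = inverse ((z+1)/2)" using assms by (simp add: w_def field_simps)
    have pos: "(z+1)/2 > 0" using assms by simp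
    have "hyp2F1 (1-m) m 1 x = (1 - x) powr (-(1-m)) * hyp2F1_series (1-m) (1 - m) 1 (x/(x-1))"
      using False x1 by (simp add: hyp2F1_def)
    also have "\<dots> = ((z+1)/2) powr (m-1) * hyp2F1_series (1-m) (1-m) 1 w"
      by (subst e3, subst e1) (simp add: w_def)
    also have "\<dots> = ((z+1)/2) powr (m-1) * (inverse ((z+1)/2) powr (2*m-1) * hyp2F1_series m m 1 w)"
      by (simp add: euler_real[OF w(1)] ew)
    also have "\<dots> = ((z+1)/2) powr (-m) * hyp2F1_series m m 1 w"
      using powr_aux[of "(z+1)/2" m] by (simp only: mult.assoc[symmetric])
    finally show ?thesis unfolding L w_def .
  qed
qed

abbreviation "UU \<equiv> uniform_measure lborel {0..pi}"

lemma UU_prob: "prob_space UU"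
  by (rule prob_space_uniform_measure) (auto simp: emeasure_lborel_Icc)

lemma UU_finite: "finite_measure UU"
  using UU_prob unfolding prob_space_def by simp

lemma UU_density: "UU = density lborel (\<lambda>x. ennreal (indicator {0..pi} x / pi))"
proof -
  have "\<And>x. (indicator {0..pi} x :: ennreal) / emeasure lborel {0..pi} = ennreal (indicator {0..pi} x / pi)"
    using divide_ennreal[of 1 pi] by (simp add: emeasure_lborel_Icc split: split_indicator)
  then show ?thesis unfolding uniform_measure_def by simp
qed

lemma intUU:
  fixes f :: "real \<Rightarrow> real"
  assumes [measurable]: "f \<in> borel_measurable borel"
  shows "integral\<^sup>L UU f = (\<integral>x. indicator {0..pi} x * f x \<partial>lborel) / pi"
proof -
  have "integral\<^sup>L UU f = (\<integral>x. (indicator {0..pi} x / pi) *\<^sub>R f x \<partial>lborel)"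
    unfolding UU_density by (rule integral_density) auto
  also have "\<dots> = (\<integral>x. indicator {0..pi} x * f x / pi \<partial>lborel)"
    by simp
  also have "\<dots> = (\<integral>x. indicator {0..pi} x * f x \<partial>lborel) / pi"
    by (rule integral_divide_zero)
  finally show ?thesis .
qed

lemma int_cos: "integral\<^sup>L UU (\<lambda>\<theta>. cos (real n * \<theta>)) = (if n = 0 then 1 else 0)"
proof -
  have "(\<integral>x. indicator {0..pi} x * cos (real n * x) \<partial>lborel) = (if n = 0 then pi else 0)"
  proof (cases "n = 0")
    case True
    have "(\<integral>x. indicator {0..pi} x *\<^sub>R (1::real) \<partial>lborel) = pi - 0"
      by (rule integral_FTC_atLeastAtMost[where F = "\<lambda>x. x"]) (auto intro!: derivative_eq_intros continuous_intros)
    then show ?thesis using True by simp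
  next
    case False
    have "(\<integral>x. indicator {0..pi} x *\<^sub>R cos (real n * x) \<partial>lborel) = sin (real n * pi) / real n - sin (real n * 0) / real n"
      by (rule integral_FTC_atLeastAtMost[where F = "\<lambda>x. sin (real n * x) / real n"])
         (use False in \<open>auto intro!: derivative_eq_intros continuous_intros simp: has_real_derivative_iff_has_vector_derivative[symmetric]\<close>)
    then show ?thesis using False by (simp add: sin_npi)
  qed
  then show ?thesis by (subst intUU) auto
qed

lemma meas_UU: "measurable UU borel = measurable borel (borel :: real measure)"
  by (intro measurable_cong_sets) simp_all

lemma UU_suminf:
  fixes f :: "nat \<Rightarrow> real \<Rightarrow> real" and b :: "nat \<Rightarrow> real"
  assumes meas: "\<And>i. f i \<in> borel_measurable borel"
    and bnd: "\<And>i \<theta>. \<bar>f i \<theta>\<bar> \<le> b i"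
    and summ: "summable b"
  shows "integral\<^sup>L UU (\<lambda>\<theta>. \<Sum>i. f i \<theta>) = (\<Sum>i. integral\<^sup>L UU (f i))"
proof (rule integral_suminf)
  have m: "f i \<in> borel_measurable UU" for i using meas[of i] by (simp add: meas_UU)
  show int: "integrable UU (f i)" for i
    by (rule finite_measure.integrable_const_bound[OF UU_finite _ m]) (use bnd in auto)
  show "AE x in UU. summable (\<lambda>i. norm (f i x))"
    by (intro AE_I2 summable_comparison_test[OF _ summ]) (use bnd in auto)
  show "summable (\<lambda>i. \<integral>x. norm (f i x) \<partial>UU)"
  proof (rule summable_comparison_test[OF _ summ], intro exI[of _ 0] allI impI)
    fix i
    have "(\<integral>x. norm (f i x) \<partial>UU) \<le> b i"
      by (rule prob_space.integral_le_const[OF UU_prob]) (use int[of i] bnd in auto)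
    moreover have "0 \<le> (\<integral>x. norm (f i x) \<partial>UU)" by simp
    ultimately show "norm (\<integral>x. norm (f i x) \<partial>UU) \<le> b i" by simp
  qed
qed

definition cc :: "real \<Rightarrow> nat \<Rightarrow> real" where "cc m k = (-m) gchoose k"
definition zz :: "real \<Rightarrow> real \<Rightarrow> complex" where "zz r \<theta> = complex_of_real r * cis \<theta>"
definition FF :: "real \<Rightarrow> real \<Rightarrow> real \<Rightarrow> complex" where
  "FF m r \<theta> = (1 + zz r \<theta>) powr complex_of_real (-m)"
definition SS :: "real \<Rightarrow> real \<Rightarrow> nat \<Rightarrow> nat \<Rightarrow> real \<Rightarrow> real" where
  "SS m r k l \<theta> = cc m k * cc m l * r^(k+l) * cos ((real k - real l) * \<theta>)"
definition TT :: "real \<Rightarrow> real \<Rightarrow> nat \<Rightarrow> real \<Rightarrow> real" where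
  "TT m r k \<theta> = Re (complex_of_real (cc m k) * zz r \<theta> ^ k * cnj (FF m r \<theta>))"

lemma cc_summ:
  assumes "0 \<le> r" "r < 1"
  shows "summable (\<lambda>k. \<bar>cc m k\<bar> * r^k)"
proof -
  have "conv_radius (\<lambda>n. (-m) gchoose n) \<ge> 1" by (simp add: conv_radius_gchoose)
  moreover have "ereal (norm r) < 1" using assms by simp
  ultimately have "ereal (norm r) < conv_radius (\<lambda>n. (-m) gchoose n)" by (meson less_le_trans)
  from abs_summable_in_conv_radius[OF this] show ?thesis
    using assms by (simp add: cc_def abs_mult)
qed

lemma of_real_gchoose: "complex_of_real (a gchoose k) = (complex_of_real a) gchoose k"
  by (simp add: gbinomial_pochhammer pochhammer_of_real[symmetric])

lemma zz_norm: "0 \<le> r \<Longrightarrow> norm (zz r \<theta>) = r"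
  by (simp add: zz_def norm_mult)

lemma FF_sums:
  assumes "0 \<le> r" "r < 1"
  shows "(\<lambda>k. complex_of_real (cc m k) * zz r \<theta> ^ k) sums FF m r \<theta>"
  using gen_binomial_complex[of "zz r \<theta>" "complex_of_real (-m)"] assms
  by (simp add: zz_norm FF_def cc_def of_real_gchoose)

lemma zz_pow: "zz r \<theta> ^ k = complex_of_real (r^k) * cis (real k * \<theta>)"
  unfolding zz_def power_mult_distrib Complex.DeMoivre by simp

lemma TT_sums:
  assumes "0 \<le> r" "r < 1"
  shows "(\<lambda>l. SS m r k l \<theta>) sums TT m r k \<theta>"
proof -
  have "(\<lambda>l. cnj (complex_of_real (cc m l) * zz r \<theta> ^ l)) sums cnj (FF m r \<theta>)"
    by (rule sums_cnj[THEN iffD2, OF FF_sums[OF assms]])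
  then have "(\<lambda>l. complex_of_real (cc m k) * zz r \<theta> ^ k * cnj (complex_of_real (cc m l) * zz r \<theta> ^ l))
      sums (complex_of_real (cc m k) * zz r \<theta> ^ k * cnj (FF m r \<theta>))"
    by (rule sums_mult)
  then have "(\<lambda>l. Re (complex_of_real (cc m k) * zz r \<theta> ^ k * cnj (complex_of_real (cc m l) * zz r \<theta> ^ l)))
      sums TT m r k \<theta>"
    unfolding TT_def by (rule sums_Re)
  moreover have "Re (complex_of_real (cc m k) * zz r \<theta> ^ k * cnj (complex_of_real (cc m l) * zz r \<theta> ^ l)) = SS m r k l \<theta>" for l
  proof -
    have "complex_of_real (cc m k) * zz r \<theta> ^ k * cnj (complex_of_real (cc m l) * zz r \<theta> ^ l)
        = complex_of_real (cc m k * cc m l * r^(k+l)) * (cis (real k * \<theta>) * cis (- (real l * \<theta>)))"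
      by (simp add: zz_pow cis_cnj power_add mult_ac)
    also have "\<dots> = complex_of_real (cc m k * cc m l * r^(k+l)) * cis ((real k - real l) * \<theta>)"
      by (simp add: cis_mult left_diff_distrib)
    finally have eq: "complex_of_real (cc m k) * zz r \<theta> ^ k * cnj (complex_of_real (cc m l) * zz r \<theta> ^ l)
        = complex_of_real (cc m k * cc m l * r^(k+l)) * cis ((real k - real l) * \<theta>)" .
    have re: "Re (complex_of_real a * cis t) = a * cos t" for a t by simp
    show ?thesis unfolding eq re SS_def ..
  qed
  ultimately show ?thesis by simp
qed

lemma norm_1zz_sq: "norm (1 + zz r \<theta>) ^ 2 = 1 + r^2 + 2*r*cos \<theta>"
proof -
  have "norm (1 + zz r \<theta>) ^ 2 = (1 + r * cos \<theta>)^2 + (r * sin \<theta>)^2"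
    by (simp add: cmod_power2 zz_def cis.sel)
  also have "\<dots> = 1 + r^2 * (sin \<theta>^2 + cos \<theta>^2) + 2*r*cos \<theta>"
    by algebra
  finally show ?thesis by simp
qed

lemma norm_1zz_ge:
  assumes "0 \<le> r" shows "1 - r \<le> norm (1 + zz r \<theta>)"
  using norm_triangle_ineq2[of 1 "- zz r \<theta>"] zz_norm[OF assms, of \<theta>] by simp

lemma norm_FF: "norm (FF m r \<theta>) = norm (1 + zz r \<theta>) powr (-m)"
  unfolding FF_def by (subst norm_powr_real_powr') auto

lemma g_sums:
  assumes "0 \<le> r" "r < 1"
  shows "(\<lambda>k. TT m r k \<theta>) sums ((1 + r^2 + 2*r*cos \<theta>) powr (-m))"
proof -
  have "(\<lambda>k. complex_of_real (cc m k) * zz r \<theta> ^ k * cnj (FF m r \<theta>)) sums (FF m r \<theta> * cnj (FF m r \<theta>))"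
    by (rule sums_mult2[OF FF_sums[OF assms]])
  from sums_Re[OF this] have s: "(\<lambda>k. TT m r k \<theta>) sums Re (FF m r \<theta> * cnj (FF m r \<theta>))"
    unfolding TT_def .
  have pos: "0 < norm (1 + zz r \<theta>)" using norm_1zz_ge[OF assms(1), of \<theta>] assms by linarith
  have "Re (FF m r \<theta> * cnj (FF m r \<theta>)) = norm (FF m r \<theta>) ^ 2"
    by (simp add: complex_norm_square[symmetric] del: of_real_power)
  also have "\<dots> = (norm (1 + zz r \<theta>) ^ 2) powr (-m)"
    unfolding norm_FF using pos by (simp add: power2_eq_square powr_mult)
  also have "\<dots> = (1 + r^2 + 2*r*cos \<theta>) powr (-m)" by (simp add: norm_1zz_sq)
  finally show ?thesis using s by simp
qed

lemma FF_bound: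
  assumes "0 \<le> m" "0 \<le> r" "r < 1"
  shows "norm (FF m r \<theta>) \<le> (1 - r) powr (-m)"
proof -
  have "0 < norm (1 + zz r \<theta>)" using assms norm_1zz_ge[OF assms(2), of \<theta>] by linarith
  then show ?thesis
    unfolding norm_FF by (intro powr_mono2') (use assms norm_1zz_ge[OF assms(2), of \<theta>] in auto)
qed

lemma TT_bound:
  assumes "0 \<le> m" "0 \<le> r" "r < 1"
  shows "\<bar>TT m r k \<theta>\<bar> \<le> (\<bar>cc m k\<bar> * r^k) * (1 - r) powr (-m)"
proof -
  have "\<bar>TT m r k \<theta>\<bar> \<le> norm (complex_of_real (cc m k) * zz r \<theta> ^ k * cnj (FF m r \<theta>))"
    unfolding TT_def by (rule abs_Re_le_cmod)
  also have "\<dots> = \<bar>cc m k\<bar> * r^k * norm (FF m r \<theta>)"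
    using assms by (simp add: norm_mult norm_power zz_norm)
  also have "\<dots> \<le> \<bar>cc m k\<bar> * r^k * (1 - r) powr (-m)"
    by (rule mult_left_mono[OF FF_bound[OF assms]]) (use assms in simp)
  finally show ?thesis .
qed

lemma SS_bound:
  assumes "0 \<le> r"
  shows "\<bar>SS m r k l \<theta>\<bar> \<le> (\<bar>cc m k\<bar> * r^k) * (\<bar>cc m l\<bar> * r^l)"
proof -
  have "\<bar>SS m r k l \<theta>\<bar> = \<bar>cc m k\<bar> * \<bar>cc m l\<bar> * r^(k+l) * \<bar>cos ((real k - real l) * \<theta>)\<bar>"
    using assms by (simp add: SS_def abs_mult)
  also have "\<dots> \<le> \<bar>cc m k\<bar> * \<bar>cc m l\<bar> * r^(k+l) * 1"
    by (rule mult_left_mono) (use assms in auto)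
  finally show ?thesis by (simp add: power_add mult_ac)
qed

lemma SS_meas: "SS m r k l \<in> borel_measurable borel"
  unfolding SS_def by (intro borel_measurable_continuous_onI continuous_intros)

lemma int_SS: "integral\<^sup>L UU (SS m r k l) = (if k = l then cc m k ^ 2 * r^(2*k) else 0)"
proof -
  define d where "d = (if l \<le> k then k - l else l - k)"
  have c: "cos ((real k - real l) * \<theta>) = cos (real d * \<theta>)" for \<theta>
  proof (cases "l \<le> k")
    case True then show ?thesis by (simp add: d_def of_nat_diff)
  next
    case False
    then have "(real k - real l) * \<theta> = - (real d * \<theta>)" by (simp add: d_def of_nat_diff algebra_simps)
    then show ?thesis by simp
  qed
  have "integral\<^sup>L UU (SS m r k l) = cc m k * cc m l * r^(k+l) * integral\<^sup>L UU (\<lambda>\<theta>. cos (real d * \<theta>))"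
    unfolding SS_def c by simp
  also have "\<dots> = (if k = l then cc m k ^ 2 * r^(2*k) else 0)"
    by (simp add: int_cos d_def power2_eq_square mult_2)
  finally show ?thesis .
qed

lemma int_TT:
  assumes "0 \<le> r" "r < 1"
  shows "integral\<^sup>L UU (TT m r k) = cc m k ^ 2 * r^(2*k)"
proof -
  have e: "TT m r k = (\<lambda>\<theta>. \<Sum>l. SS m r k l \<theta>)"
    using TT_sums[OF assms] by (auto simp: sums_iff)
  have "integral\<^sup>L UU (TT m r k) = (\<Sum>l. integral\<^sup>L UU (SS m r k l))"
    unfolding e
    by (rule UU_suminf[OF SS_meas SS_bound[OF assms(1)] summable_mult[OF cc_summ[OF assms]]])
  also have "\<dots> = (\<Sum>l. if l = k then cc m k ^ 2 * r^(2*k) else 0)"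
    by (simp add: int_SS eq_commute)
  also have "\<dots> = cc m k ^ 2 * r^(2*k)"
    using sums_single[of k "\<lambda>_. cc m k ^ 2 * r^(2*k)"] by (simp add: sums_iff)
  finally show ?thesis .
qed

lemma TT_meas:
  assumes "0 \<le> r" "r < 1"
  shows "TT m r k \<in> borel_measurable borel"
proof -
  have e: "TT m r k = (\<lambda>\<theta>. \<Sum>l. SS m r k l \<theta>)"
    using TT_sums[OF assms] by (auto simp: sums_iff)
  show ?thesis unfolding e by (intro borel_measurable_suminf SS_meas)
qed

lemma laplace_int:
  assumes "0 \<le> m" "0 \<le> r" "r < 1"
  shows "integral\<^sup>L UU (\<lambda>\<theta>. (1 + r^2 + 2*r*cos \<theta>) powr (-m)) = hyp2F1_series m m 1 (r^2)"
proof -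
  have e: "(\<lambda>\<theta>. (1 + r^2 + 2*r*cos \<theta>) powr (-m)) = (\<lambda>\<theta>. \<Sum>k. TT m r k \<theta>)"
    using g_sums[OF assms(2,3)] by (auto simp: sums_iff)
  have "integral\<^sup>L UU (\<lambda>\<theta>. (1 + r^2 + 2*r*cos \<theta>) powr (-m)) = (\<Sum>k. integral\<^sup>L UU (TT m r k))"
    unfolding e
    by (rule UU_suminf[OF TT_meas[OF assms(2,3)] TT_bound[OF assms] summable_mult2[OF cc_summ[OF assms(2,3)]]])
  also have "\<dots> = (\<Sum>k. cc m k ^ 2 * r^(2*k))" by (simp add: int_TT[OF assms(2,3)])
  also have "\<dots> = hyp2F1_series m m 1 (r^2)"
    unfolding hyp2F1_series_def
    by (rule suminf_cong) (simp add: cc_def gbinomial_pochhammer pochhammer_fact[symmetric] power2_eq_square power_mult power_mult_distrib)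
  finally show ?thesis .
qed

lemma mgf_reduce:
  fixes kf :: "real \<Rightarrow> real"
  assumes M: "mftr_distr K \<Delta> m \<mu> g M" and s: "s \<le> 0"
    and kf: "\<And>\<theta>. kms_mgf (K * (1 + \<Delta> * cos \<theta>)) \<mu> m (g * (1 + K * (1 + \<Delta> * cos \<theta>)) / (1 + K)) s = kf \<theta>"
    and kpos: "\<And>\<theta>. 0 \<le> kf \<theta>"
    and kint: "integrable UU kf"
  shows "(\<integral>x. exp (s * x) \<partial>M) = integral\<^sup>L UU kf"
proof -
  from M obtain N where N: "N \<in> measurable UU (subprob_algebra borel)"
    and Nk: "\<And>\<theta>. \<theta> \<in> {0..pi} \<Longrightarrow> kms_distr (K * (1 + \<Delta> * cos \<theta>)) \<mu> m
                             (g * (1 + K * (1 + \<Delta> * cos \<theta>)) / (1 + K)) (N \<theta>)"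
    and Meq: "M = UU \<bind> N"
    unfolding mftr_distr_def by blast
  have spUU: "space UU \<noteq> {}" by simp
  have setsM: "sets M = sets borel" unfolding Meq by (rule sets_bind[OF sets_kernel[OF N] spUU])
  have fm: "(\<lambda>x. exp (s * x)) \<in> borel_measurable M"
  proof -
    have eq: "borel_measurable M = borel_measurable (borel :: real measure)"
      by (rule measurable_cong_sets[OF setsM refl])
    show ?thesis unfolding eq by measurable
  qed
  have "(\<integral>x. exp (s * x) \<partial>M) = enn2real (\<integral>\<^sup>+x. ennreal (exp (s * x)) \<partial>M)"
    by (rule integral_eq_nn_integral[OF fm]) simp
  also have "(\<integral>\<^sup>+x. ennreal (exp (s * x)) \<partial>M) = (\<integral>\<^sup>+\<theta>. \<integral>\<^sup>+y. ennreal (exp (s * y)) \<partial>N \<theta> \<partial>UU)"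
    unfolding Meq by (rule nn_integral_bind[OF _ N]) measurable
  also have "\<dots> = (\<integral>\<^sup>+\<theta>. ennreal (kf \<theta>) \<partial>UU)"
  proof (rule nn_integral_cong_AE, rule AE_uniform_measureI)
    show "{0..pi} \<in> sets lborel" by simp
    show "AE \<theta> in lborel. \<theta> \<in> {0..pi} \<longrightarrow> (\<integral>\<^sup>+y. ennreal (exp (s * y)) \<partial>N \<theta>) = ennreal (kf \<theta>)"
    proof (rule AE_I2, rule impI)
      fix \<theta> :: real assume th: "\<theta> \<in> {0..pi}"
      note kd = Nk[OF th, unfolded kms_distr_def]
      interpret P: prob_space "N \<theta>" using kd by blast
      have sN: "sets (N \<theta>) = sets borel" using kd by blast
      have mN: "measurable (N \<theta>) borel = measurable borel (borel :: real measure)"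
        by (intro measurable_cong_sets sN) simp
      have ae: "AE y in N \<theta>. y \<in> {0<..}"
        using kd by (intro P.AE_prob_1) (auto simp: P.emeasure_eq_measure sN)
      have int: "integrable (N \<theta>) (\<lambda>y. exp (s * y))"
      proof (rule P.integrable_const_bound[where B=1])
        show "AE y in N \<theta>. norm (exp (s * y)) \<le> 1"
          using ae by eventually_elim (use s in \<open>auto simp: mult_nonpos_nonneg\<close>)
        show "(\<lambda>y. exp (s * y)) \<in> borel_measurable (N \<theta>)" unfolding mN by measurable
      qed
      have "(\<integral>\<^sup>+y. ennreal (exp (s * y)) \<partial>N \<theta>) = ennreal (\<integral>y. exp (s * y) \<partial>N \<theta>)"
        by (rule nn_integral_eq_integral[OF int]) simp
      also have "(\<integral>y. exp (s * y) \<partial>N \<theta>) = kf \<theta>" using kd s kf by auto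
      finally show "(\<integral>\<^sup>+y. ennreal (exp (s * y)) \<partial>N \<theta>) = ennreal (kf \<theta>)" .
    qed
  qed
  also have "\<dots> = ennreal (integral\<^sup>L UU kf)"
    by (rule nn_integral_eq_integral[OF kint]) (simp add: kpos)
  finally have "(\<integral>x. exp (s * x) \<partial>M) = enn2real (ennreal (integral\<^sup>L UU kf))" .
  moreover have "0 \<le> integral\<^sup>L UU kf" using kpos by (simp add: integral_nonneg_AE)
  ultimately show ?thesis by simp
qed

theorem lemma1:
  fixes K \<Delta> m \<mu> g s :: real and M :: "real measure"
  assumes "K > 0" and "0 \<le> \<Delta>" and "\<Delta> \<le> 1" and "m > 0" and "\<mu> > 0" and "g > 0"
    and "mftr_distr K \<Delta> m \<mu> g M"
    and "s \<le> 0"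
  shows "(\<integral>x. exp (s * x) \<partial>M) =
    (let R = ((m + \<mu> * K)\<^sup>2 - (\<mu> * K * \<Delta>)\<^sup>2) * g\<^sup>2 * s\<^sup>2
             - 2 * m * \<mu> * (1 + K) * (m + \<mu> * K) * g * s + ((1 + K) * m * \<mu>)\<^sup>2
     in m powr m * \<mu> powr \<mu> * (1 + K) powr \<mu> * (\<mu> * (1 + K) - g * s) powr (m - \<mu>)
        / (sqrt R) powr m
        * legendreP (m - 1) ((m * \<mu> * (1 + K) - (\<mu> * K + m) * g * s) / sqrt R))"
proof -
  note K = assms(1) and D0 = assms(2) and D1 = assms(3) and m0 = assms(4) and mu0 = assms(5)
    and g0 = assms(6) and MD = assms(7) and s0 = assms(8)
  define Q where "Q = \<mu> * (1 + K)"
  define P where "P = \<mu> * (1 + K) - g * s"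
  define C where "C = m * \<mu> * (1 + K)"
  define a where "a = m * \<mu> * (1 + K) - (\<mu> * K + m) * g * s"
  define b where "b = - (\<mu> * K * \<Delta> * g * s)"
  define R where "R = a^2 - b^2"
  have Q0: "Q > 0" using K mu0 by (simp add: Q_def)
  have P0: "P > 0"
  proof -
    have "g * s \<le> 0" using g0 s0 by (simp add: mult_nonneg_nonpos)
    moreover have "0 < \<mu> * (1 + K)" using K mu0 by simp
    ultimately show ?thesis by (simp add: P_def)
  qed
  have C0: "C > 0" using K mu0 m0 by (simp add: C_def)
  have gs: "0 \<le> - (g * s)" using g0 s0 by (simp add: mult_nonneg_nonpos)
  have b0: "0 \<le> b"
  proof -
    have "b = (\<mu> * K * \<Delta>) * (- (g * s))" by (simp add: b_def)
    moreover have "0 \<le> \<mu> * K * \<Delta>" using mu0 K D0 by simp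
    ultimately show ?thesis using gs by (metis mult_nonneg_nonneg)
  qed
  have ab: "b < a"
  proof -
    have "a - b = C + (\<mu> * K * (1 - \<Delta>) + m) * (- (g * s))"
      by (simp add: a_def b_def C_def algebra_simps)
    moreover have "0 \<le> (\<mu> * K * (1 - \<Delta>) + m) * (- (g * s))"
      using mu0 K D1 m0 gs by (intro mult_nonneg_nonneg) auto
    ultimately show ?thesis using C0 by linarith
  qed
  have a0: "a > 0" using ab b0 by linarith
  have R0: "R > 0"
  proof -
    have "R = (a - b) * (a + b)" by (simp add: R_def power2_eq_square algebra_simps)
    then show ?thesis using ab b0 by simp
  qed
  have Req: "((m + \<mu> * K)\<^sup>2 - (\<mu> * K * \<Delta>)\<^sup>2) * g\<^sup>2 * s\<^sup>2
             - 2 * m * \<mu> * (1 + K) * (m + \<mu> * K) * g * s + ((1 + K) * m * \<mu>)\<^sup>2 = R"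
    by (simp add: R_def a_def b_def power2_eq_square algebra_simps)
  define sR where "sR = sqrt R"
  have sR0: "sR > 0" using R0 by (simp add: sR_def)
  have sRsq: "sR^2 = R" using R0 by (simp add: sR_def)
  have sRa: "sR \<le> a"
  proof -
    have "sR^2 \<le> a^2" using sRsq by (simp add: R_def)
    then show ?thesis using a0 sR0 by (simp add: power2_le_iff_abs_le)
  qed
  define \<alpha> where "\<alpha> = (a + sR) / 2"
  define \<beta> where "\<beta> = (a - sR) / 2"
  have al0: "\<alpha> > 0" using a0 sR0 by (simp add: \<alpha>_def)
  have be0: "\<beta> \<ge> 0" using sRa by (simp add: \<beta>_def)
  have bea: "\<beta> < \<alpha>" using sR0 by (simp add: \<alpha>_def \<beta>_def)
  define r where "r = sqrt (\<beta> / \<alpha>)"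
  have r0: "0 \<le> r" using al0 be0 by (simp add: r_def)
  have r1: "r < 1" using al0 be0 bea by (simp add: r_def real_sqrt_lt_1_iff)
  have rsq: "r^2 = \<beta> / \<alpha>" using al0 be0 by (simp add: r_def)
  have ar: "\<alpha> * r = b / 2"
  proof -
    have "sqrt (\<alpha>^2 * (\<beta> / \<alpha>)) = sqrt (\<alpha>^2) * sqrt (\<beta> / \<alpha>)" by (rule real_sqrt_mult)
    then have "\<alpha> * r = sqrt (\<alpha>^2 * (\<beta> / \<alpha>))" using al0 by (simp add: r_def)
    also have "\<alpha>^2 * (\<beta> / \<alpha>) = (b / 2)^2"
    proof -
      have "\<alpha>^2 * (\<beta> / \<alpha>) = \<alpha> * \<beta>" using al0 by (simp add: power2_eq_square)
      also have "\<dots> = (a^2 - sR^2) / 4" by (simp add: \<alpha>_def \<beta>_def power2_eq_square algebra_simps)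
      also have "\<dots> = (b / 2)^2" using sRsq by (simp add: R_def power2_eq_square)
      finally show ?thesis .
    qed
    finally show ?thesis using b0 by simp
  qed
  have key: "a + b * cos \<theta> = \<alpha> * (1 + r^2 + 2 * r * cos \<theta>)" for \<theta>
  proof -
    have "\<alpha> * (1 + r^2) = a" using rsq al0 by (simp add: \<alpha>_def \<beta>_def field_simps)
    moreover have "\<alpha> * (1 + r^2 + 2 * r * cos \<theta>) = \<alpha> * (1 + r^2) + 2 * (\<alpha> * r) * cos \<theta>"
      by (simp add: algebra_simps)
    ultimately show ?thesis using ar by simp
  qed
  define h where "h = (\<lambda>\<theta>::real. (1 + r^2 + 2 * r * cos \<theta>) powr (-m))"
  define A1 where "A1 = 1 - g * s / (\<mu> * (1 + K))"
  have A1eq: "A1 = P / Q" using Q0 by (simp add: A1_def P_def Q_def field_simps)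
  define kf where "kf = (\<lambda>\<theta>. A1 powr (m - \<mu>) * C powr m * \<alpha> powr (-m) * h \<theta>)"
  have hbase: "(1 - r)^2 \<le> 1 + r^2 + 2 * r * cos \<theta>" for \<theta>
  proof -
    have "- 1 \<le> cos \<theta>" by simp
    then have "(2 * r) * (- 1) \<le> (2 * r) * cos \<theta>" using r0 by (intro mult_left_mono) auto
    then have "- (2 * r) \<le> 2 * r * cos \<theta>" by simp
    then show ?thesis by (simp add: power2_eq_square algebra_simps)
  qed
  have hpos: "0 < 1 + r^2 + 2 * r * cos \<theta>" for \<theta>
    using hbase[of \<theta>] r1 by (smt (verit) power2_less_0 zero_less_power2)
  have kf: "kms_mgf (K * (1 + \<Delta> * cos \<theta>)) \<mu> m (g * (1 + K * (1 + \<Delta> * cos \<theta>)) / (1 + K)) s = kf \<theta>" for \<theta>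
  proof -
    define \<kappa> where "\<kappa> = K * (1 + \<Delta> * cos \<theta>)"
    have "- 1 \<le> cos \<theta>" by simp
    then have "- \<Delta> \<le> \<Delta> * cos \<theta>" using D0 by (metis mult_left_mono mult_minus1_right)
    then have "0 \<le> 1 + \<Delta> * cos \<theta>" using D1 by linarith
    then have k0: "0 \<le> \<kappa>" using K by (simp add: \<kappa>_def)
    have nz1: "1 + \<kappa> \<noteq> 0" "1 + K \<noteq> 0" "\<mu> \<noteq> 0" "m \<noteq> 0" using k0 K mu0 m0 by auto
    have e1: "1 - g * (1 + \<kappa>) / (1 + K) * s / (\<mu> * (1 + \<kappa>)) = A1"
    proof -
      have "g * (1 + \<kappa>) / (1 + K) * s / (\<mu> * (1 + \<kappa>)) = (g * s / (\<mu> * (1 + K))) * ((1 + \<kappa>) / (1 + \<kappa>))"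
        by (simp add: mult_ac)
      then show ?thesis using nz1 by (simp add: A1_def)
    qed
    have e2: "1 - (\<mu> * \<kappa> + m) * (g * (1 + \<kappa>) / (1 + K)) * s / (m * \<mu> * (1 + \<kappa>)) = (a + b * cos \<theta>) / C"
    proof -
      have "(\<mu> * \<kappa> + m) * (g * (1 + \<kappa>) / (1 + K)) * s / (m * \<mu> * (1 + \<kappa>))
          = ((\<mu> * \<kappa> + m) * g * s / C) * ((1 + \<kappa>) / (1 + \<kappa>))"
        by (simp add: C_def mult_ac)
      also have "\<dots> = (\<mu> * \<kappa> + m) * g * s / C" using nz1 by simp
      finally have "1 - (\<mu> * \<kappa> + m) * (g * (1 + \<kappa>) / (1 + K)) * s / (m * \<mu> * (1 + \<kappa>))
          = (C - (\<mu> * \<kappa> + m) * g * s) / C"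
        using C0 by (simp add: diff_divide_distrib)
      also have "C - (\<mu> * \<kappa> + m) * g * s = a + b * cos \<theta>"
        by (simp add: C_def a_def b_def \<kappa>_def algebra_simps)
      finally show ?thesis .
    qed
    have "((a + b * cos \<theta>) / C) powr (-m) = C powr m * \<alpha> powr (-m) * h \<theta>"
    proof -
      have "((a + b * cos \<theta>) / C) powr (-m) = (\<alpha> * (1 + r^2 + 2 * r * cos \<theta>)) powr (-m) / C powr (-m)"
        unfolding key using al0 hpos[of \<theta>] C0 by (simp add: powr_divide)
      also have "\<dots> = \<alpha> powr (-m) * h \<theta> * C powr m"
        using al0 hpos[of \<theta>] by (simp add: powr_mult h_def powr_minus divide_inverse)
      finally show ?thesis by simp
    qed
    then show ?thesis
      unfolding kms_mgf_def \<kappa>_def[symmetric] e1 e2 kf_def by simp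
  qed
  have kpos: "0 \<le> kf \<theta>" for \<theta> by (simp add: kf_def h_def)
  have hmeas: "h \<in> borel_measurable UU" unfolding meas_UU h_def by measurable
  have hint: "integrable UU h"
  proof (rule finite_measure.integrable_const_bound[OF UU_finite _ hmeas, where B = "((1 - r)^2) powr (-m)"])
    show "AE x in UU. norm (h x) \<le> ((1 - r)^2) powr (-m)"
    proof (rule AE_I2)
      fix \<theta>
      have "(1 + r^2 + 2 * r * cos \<theta>) powr (-m) \<le> ((1 - r)^2) powr (-m)"
        by (rule powr_mono2') (use m0 r1 hbase[of \<theta>] in auto)
      then show "norm (h \<theta>) \<le> ((1 - r)^2) powr (-m)" by (simp add: h_def)
    qed
  qed
  have kint: "integrable UU kf" unfolding kf_def using hint by simp
  have "(\<integral>x. exp (s * x) \<partial>M) = integral\<^sup>L UU kf"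
    by (rule mgf_reduce[OF MD s0 kf kpos kint])
  also have "\<dots> = A1 powr (m - \<mu>) * C powr m * \<alpha> powr (-m) * integral\<^sup>L UU h"
    by (simp add: kf_def)
  also have "integral\<^sup>L UU h = hyp2F1_series m m 1 (r^2)"
    unfolding h_def by (rule laplace_int) (use m0 r0 r1 in auto)
  finally have LHS: "(\<integral>x. exp (s * x) \<partial>M) = A1 powr (m - \<mu>) * C powr m * \<alpha> powr (-m) * hyp2F1_series m m 1 (r^2)" .
  have z1: "a / sR \<ge> 1" using sRa sR0 by simp
  have l: "legendreP (m - 1) (a / sR) = (\<alpha> / sR) powr (-m) * hyp2F1_series m m 1 (r^2)"
  proof -
    have "(a / sR + 1) / 2 = \<alpha> / sR" using sR0 by (simp add: \<alpha>_def field_simps)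
    moreover have "(a / sR - 1) / (a / sR + 1) = r^2"
    proof -
      have "a / sR - 1 = (a - sR) / sR" "a / sR + 1 = (a + sR) / sR" using sR0 by (simp_all add: field_simps)
      then have "(a / sR - 1) / (a / sR + 1) = (a - sR) / (a + sR)" using sR0 by simp
      also have "\<dots> = \<beta> / \<alpha>"
      proof -
        have "a + sR \<noteq> 0" using a0 sR0 by simp
        then show ?thesis by (simp add: \<alpha>_def \<beta>_def field_simps)
      qed
      finally show ?thesis using rsq by simp
    qed
    ultimately show ?thesis using legendre_eq[OF z1, of m] by simp
  qed
  have c1: "A1 powr (m - \<mu>) * C powr m = m powr m * \<mu> powr \<mu> * (1 + K) powr \<mu> * P powr (m - \<mu>)"
  proof -
    have "A1 powr (m - \<mu>) * C powr m = P powr (m - \<mu>) / Q powr (m - \<mu>) * (m powr m * Q powr m)"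
      using P0 Q0 m0 by (simp add: A1eq powr_divide C_def Q_def powr_mult mult.assoc)
    also have "P powr (m - \<mu>) / Q powr (m - \<mu>) * (m powr m * Q powr m) = m powr m * Q powr \<mu> * P powr (m - \<mu>)"
    proof -
      have qq: "Q powr m = Q powr \<mu> * Q powr (m - \<mu>)" by (simp add: powr_add[symmetric])
      have pos: "Q powr (m - \<mu>) \<noteq> 0" using Q0 by simp
      show ?thesis unfolding qq using pos by (simp add: field_simps)
    qed
    also have "Q powr \<mu> = \<mu> powr \<mu> * (1 + K) powr \<mu>" using mu0 K by (simp add: Q_def powr_mult)
    finally show ?thesis by (simp add: mult_ac)
  qed
  have c2: "(\<alpha> / sR) powr (-m) = \<alpha> powr (-m) * sR powr m"
  proof -
    have "(\<alpha> / sR) powr (-m) = \<alpha> powr (-m) / sR powr (-m)"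
      by (rule powr_divide; use al0 sR0 in auto)
    also have "sR powr (-m) = inverse (sR powr m)" by (rule powr_minus)
    finally show ?thesis by (simp add: divide_inverse)
  qed
  have "(let R = ((m + \<mu> * K)\<^sup>2 - (\<mu> * K * \<Delta>)\<^sup>2) * g\<^sup>2 * s\<^sup>2
             - 2 * m * \<mu> * (1 + K) * (m + \<mu> * K) * g * s + ((1 + K) * m * \<mu>)\<^sup>2
     in m powr m * \<mu> powr \<mu> * (1 + K) powr \<mu> * (\<mu> * (1 + K) - g * s) powr (m - \<mu>)
        / (sqrt R) powr m
        * legendreP (m - 1) ((m * \<mu> * (1 + K) - (\<mu> * K + m) * g * s) / sqrt R))
     = m powr m * \<mu> powr \<mu> * (1 + K) powr \<mu> * P powr (m - \<mu>) / sR powr m * legendreP (m - 1) (a / sR)"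
    unfolding Let_def Req by (simp add: P_def sR_def a_def)
  also have "\<dots> = A1 powr (m - \<mu>) * C powr m * \<alpha> powr (-m) * hyp2F1_series m m 1 (r^2)"
    unfolding l c2 c1 using sR0 by (simp add: field_simps)
  finally show ?thesis using LHS by simp
qed

end
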